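(* Let $v$ be a game on $N$ with $n=|N|$, let $i\in N$, and let $v_i$ be the component game (the unique $v_i\in\ell^2(V)$ with $v_i(\emptyset)=0$ and $\mathrm{d}v_i=P\mathrm{d}_iv$). Define $u_i\in\ell^2(V)$ by, for each $S\subset N\setminus\{i\}$, $$u_i(S\cup\{i\}) = \frac{1}{n2^n}\sum_{T\subset N\setminus\{i\}} \frac{\binom{n}{|S\triangle T|+1}+\binom{n}{|S\triangle T|+2}+\cdots+\binom{n}{n}}{\binom{n-1}{|S\triangle T|}}\bigl(v(T\cup\{i\})-v(T)\bigr),$$ and $u_i(S) = -u_i(S\cup\{i\})$, where $S\triangle T=(S\cup T)\setminus(S\cap T)$. Then $v_i = u_i - u_i(\emptyset)$. In particular, $$u_i(\emptyset) = -\frac{1}{n2^n}\sum_{T\subset N\setminus\{i\}}\frac{\binom{n}{|T|+1}+\cdots+\binom{n}{n}}{\binom{n-1}{|T|}}\bigl(v(T\cup\{i\})-v(T)\bigr).$$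
   Context: Let $N$ be a finite set of players. A game is a function $v\colon 2^N\to\mathbb{R}$ with $v(\emptyset)=0$. The hypercube graph $G=(V,E)$ has $V=2^N$ and oriented edges $E=\{(S,S\cup\{i\}) : i\in N,\ S\subset N\setminus\{i\}\}$. $\ell^2(V)$ and $\ell^2(E)$ are the spaces of real functions on $V$ and $E$ with the standard inner products $\sum_{S}u(S)w(S)$ and $\sum_{e}f(e)g(e)$. $\mathrm{d}\colon \ell^2(V)\to\ell^2(E)$ is $\mathrm{d}u(S,S\cup\{i\}) = u(S\cup\{i\})-u(S)$. For $i\in N$, $\mathrm{d}_i\colon\ell^2(V)\to\ell^2(E)$ is defined by $\mathrm{d}_i u(S,S\cup\{j\}) = u(S\cup\{i\})-u(S)$ if $j=i$ and $0$ if $j\ne i$. $P$ is the orthogonal projection of $\ell^2(E)$ onto the range $\mathcal{R}(\mathrm{d})$. *)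

theory Defs
  imports Complex_Main
begin

text \<open>An oriented edge (S, S \<union> {i}) is
  encoded as the pair (S, i) with i \<in> N and S \<subseteq> N - {i}.
  Elements of l2(V) are functions 'a set \<Rightarrow> real (only values on Pow N matter),
  elements of l2(E) are functions 'a set \<times> 'a \<Rightarrow> real (only values on hc_edges N matter).\<close>

definition hc_edges :: "'a set \<Rightarrow> ('a set \<times> 'a) set" where
  "hc_edges N = {(S, i). i \<in> N \<and> S \<subseteq> N - {i}}"

definition grad :: "('a set \<Rightarrow> real) \<Rightarrow> ('a set \<times> 'a) \<Rightarrow> real" where
  "grad u = (\<lambda>(S, j). u (insert j S) - u S)"

definition grad_i :: "'a \<Rightarrow> ('a set \<Rightarrow> real) \<Rightarrow> ('a set \<times> 'a) \<Rightarrow> real" where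
  "grad_i i u = (\<lambda>(S, j). if j = i then u (insert i S) - u S else 0)"

definition inner_E :: "'a set \<Rightarrow> (('a set \<times> 'a) \<Rightarrow> real) \<Rightarrow> (('a set \<times> 'a) \<Rightarrow> real) \<Rightarrow> real" where
  "inner_E N f g = (\<Sum>e\<in>hc_edges N. f e * g e)"

definition is_proj_range_d :: "'a set \<Rightarrow> (('a set \<times> 'a) \<Rightarrow> real) \<Rightarrow> (('a set \<times> 'a) \<Rightarrow> real) \<Rightarrow> bool" where
  "is_proj_range_d N f g \<longleftrightarrow>
     (\<exists>u. \<forall>e\<in>hc_edges N. g e = grad u e) \<and>
     (\<forall>u. inner_E N (\<lambda>e. f e - g e) (grad u) = 0)"

definition is_component_game :: "'a set \<Rightarrow> ('a set \<Rightarrow> real) \<Rightarrow> 'a \<Rightarrow> ('a set \<Rightarrow> real) \<Rightarrow> bool" where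
  "is_component_game N v i w \<longleftrightarrow> w {} = 0 \<and> is_proj_range_d N (grad_i i v) (grad w)"

definition symdiff :: "'a set \<Rightarrow> 'a set \<Rightarrow> 'a set" where
  "symdiff S T = (S \<union> T) - (S \<inter> T)"

definition u_top :: "'a set \<Rightarrow> ('a set \<Rightarrow> real) \<Rightarrow> 'a \<Rightarrow> 'a set \<Rightarrow> real" where
  "u_top N v i S =
     1 / (real (card N) * 2 ^ card N) *
     (\<Sum>T\<in>Pow (N - {i}).
        (\<Sum>k = card (symdiff S T) + 1..card N. real (card N choose k))
          / real ((card N - 1) choose card (symdiff S T))
        * (v (insert i T) - v T))"

definition u_fn :: "'a set \<Rightarrow> ('a set \<Rightarrow> real) \<Rightarrow> 'a \<Rightarrow> 'a set \<Rightarrow> real" where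
  "u_fn N v i X = (if i \<in> X then u_top N v i (X - {i}) else - u_top N v i X)"

end

theory Submission imports Defs begin

lemma sum_Pow_insert:
  assumes "finite A" "a \<notin> A"
  shows "(\<Sum>S\<in>Pow (insert a A). F S) = (\<Sum>T\<in>Pow A. F T + F (insert a T))"
proof -
  have inj: "inj_on (insert a) (Pow A)" using assms(2) unfolding inj_on_def by (metis PowD insert_ident subset_iff)
  have disj: "Pow A \<inter> insert a ` Pow A = {}" using assms(2) by blast
  have "(\<Sum>S\<in>Pow (insert a A). F S) = (\<Sum>S\<in>Pow A. F S) + (\<Sum>S\<in>insert a ` Pow A. F S)"
    unfolding Pow_insert using assms(1) disj by (intro sum.union_disjoint) auto
  also have "(\<Sum>S\<in>insert a ` Pow A. F S) = (\<Sum>T\<in>Pow A. F (insert a T))"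
    using inj by (simp add: sum.reindex)
  finally show ?thesis by (simp add: sum.distrib)
qed

lemma inner_E_split:
  assumes "finite N"
  shows "inner_E N h k = (\<Sum>j\<in>N. \<Sum>S\<in>Pow (N - {j}). h (S, j) * k (S, j))"
proof -
  have eq: "hc_edges N = (\<lambda>(j, S). (S, j)) ` Sigma N (\<lambda>j. Pow (N - {j}))"
    unfolding hc_edges_def by force
  have inj: "inj_on (\<lambda>(j, S). (S, j)) (Sigma N (\<lambda>j. Pow (N - {j})))"
    unfolding inj_on_def by auto
  have "inner_E N h k = (\<Sum>(j, S)\<in>Sigma N (\<lambda>j. Pow (N - {j})). h (S, j) * k (S, j))"
    unfolding inner_E_def eq using inj by (simp add: sum.reindex case_prod_unfold)
  also have "\<dots> = (\<Sum>j\<in>N. \<Sum>S\<in>Pow (N - {j}). h (S, j) * k (S, j))"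
    using assms by (subst sum.Sigma) auto
  finally show ?thesis .
qed

lemma laplace_parts:
  fixes F P :: "'a set \<Rightarrow> real"
  assumes "finite M"
  shows "(\<Sum>j\<in>M. \<Sum>T\<in>Pow (M - {j}). (F (insert j T) - F T) * (P (insert j T) - P T))
       = - (\<Sum>T\<in>Pow M. P T * (\<Sum>j\<in>M. F (symdiff T {j}) - F T))"
proof -
  have "(\<Sum>T\<in>Pow M. P T * (\<Sum>j\<in>M. F (symdiff T {j}) - F T))
      = (\<Sum>T\<in>Pow M. \<Sum>j\<in>M. P T * (F (symdiff T {j}) - F T))"
    by (simp only: sum_distrib_left)
  also have "\<dots> = (\<Sum>j\<in>M. \<Sum>T\<in>Pow M. P T * (F (symdiff T {j}) - F T))"
    by (rule sum.swap)
  also have "\<dots> = (\<Sum>j\<in>M. - (\<Sum>T\<in>Pow (M - {j}). (F (insert j T) - F T) * (P (insert j T) - P T)))"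
  proof (rule sum.cong[OF refl])
    fix j assume j: "j \<in> M"
    have M: "M = insert j (M - {j})" using j by blast
    have "(\<Sum>T\<in>Pow M. P T * (F (symdiff T {j}) - F T))
        = (\<Sum>T\<in>Pow (M - {j}). P T * (F (symdiff T {j}) - F T)
             + P (insert j T) * (F (symdiff (insert j T) {j}) - F (insert j T)))"
      by (subst M, rule sum_Pow_insert) (use assms in auto)
    also have "\<dots> = (\<Sum>T\<in>Pow (M - {j}). - ((F (insert j T) - F T) * (P (insert j T) - P T)))"
    proof (rule sum.cong[OF refl])
      fix T assume "T \<in> Pow (M - {j})"
      then have "j \<notin> T" by auto
      then have "symdiff T {j} = insert j T" "symdiff (insert j T) {j} = T"
        unfolding symdiff_def by auto
      then show "P T * (F (symdiff T {j}) - F T)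
             + P (insert j T) * (F (symdiff (insert j T) {j}) - F (insert j T))
          = - ((F (insert j T) - F T) * (P (insert j T) - P T))"
        by (simp add: algebra_simps)
    qed
    finally show "(\<Sum>T\<in>Pow M. P T * (F (symdiff T {j}) - F T))
        = - (\<Sum>T\<in>Pow (M - {j}). (F (insert j T) - F T) * (P (insert j T) - P T))"
      by (simp add: sum_negf)
  qed
  finally show ?thesis by (simp add: sum_negf)
qed

definition Ak :: "nat \<Rightarrow> nat \<Rightarrow> real" where
  "Ak n k = (\<Sum>l = k + 1..n. real (n choose l))"

definition Kk :: "nat \<Rightarrow> nat \<Rightarrow> real" where
  "Kk n k = Ak n k / real ((n - 1) choose k)"

lemma Ak_step: "k < n \<Longrightarrow> Ak n k = real (n choose (k + 1)) + Ak n (k + 1)"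
  unfolding Ak_def by (simp add: sum.atLeast_Suc_atMost)

lemma Ak_top: "n \<le> k \<Longrightarrow> Ak n k = 0"
  unfolding Ak_def by simp

lemma Ak_0: "Ak n 0 = 2 ^ n - 1"
proof -
  have "(\<Sum>l\<le>n. real (n choose l)) = 2 ^ n"
    using choose_row_sum[of n] by (metis of_nat_numeral of_nat_power of_nat_sum)
  moreover have "(\<Sum>l\<le>n. real (n choose l)) = 1 + (\<Sum>l = 1..n. real (n choose l))"
    by (simp add: atMost_atLeast0 sum.atLeast_Suc_atMost)
  ultimately show ?thesis unfolding Ak_def by simp
qed

lemma binom_rel: "real (Suc k) * real (m choose Suc k) = real (m - k) * real (m choose k)"
proof -
  have "Suc k * (m choose Suc k) = (m - k) * (m choose k)"
    using binomial_absorption[of k m] binomial_absorb_comp[of m k] by simp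
  then show ?thesis by (metis of_nat_mult)
qed

lemma kernel:
  assumes n: "n \<ge> 1" and d: "d \<le> n - 1"
  shows "(real n + 1) * Kk n d - real d * Kk n (d - 1) - real (n - 1 - d) * Kk n (d + 1)
         = (if d = 0 then real n * 2 ^ n else 0)"
proof (cases "d = 0")
  case True
  have A0: "Ak n 0 = real n + Ak n 1"
    using Ak_step[of 0 n] n by simp
  have "real (n - 1) * Kk n 1 = Ak n 1"
  proof (cases "n = 1")
    case True then show ?thesis by (simp add: Ak_top Kk_def)
  next
    case False
    then have "real (n - 1) \<noteq> 0" using n by simp
    then show ?thesis by (simp add: Kk_def)
  qed
  then show ?thesis using True A0 Ak_0[of n] by (simp add: Kk_def algebra_simps)
next
  case False
  define m where "m = n - 1"
  have nm: "n = m + 1" using n m_def by simp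
  have dm: "d \<le> m" "1 \<le> d" using d False m_def by auto
  define C where "C k = real (m choose k)" for k
  define B where "B k = real (n choose k)" for k
  define A where "A = Ak n"
  have Cpos: "C d > 0" "C (d - 1) > 0" using dm by (auto simp: C_def)
  have r1: "real d * C d = real (m - d + 1) * C (d - 1)"
    using binom_rel[of "d - 1" m] dm unfolding C_def by (simp add: Suc_diff_Suc)
  have q: "real d / C (d - 1) = real (m - d + 1) / C d"
    by (subst frac_eq_eq) (use Cpos r1 in auto)
  have "real d * Kk n (d - 1) = (real d / C (d - 1)) * A (d - 1)"
    unfolding Kk_def A_def C_def m_def by simp
  then have t2: "real d * Kk n (d - 1) = real (m - d + 1) * A (d - 1) / C d"
    unfolding q by simp
  have t3: "real (n - 1 - d) * Kk n (d + 1) = real (d + 1) * A (d + 1) / C d"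
  proof (cases "d = m")
    case True
    have z: "n - 1 - d = 0" using True m_def by simp
    have "A (d + 1) = 0" unfolding A_def by (rule Ak_top) (use True nm in simp)
    then show ?thesis unfolding z by simp
  next
    case False
    then have dl: "d < m" using dm by simp
    then have Cp: "C (d + 1) > 0" by (simp add: C_def)
    have "real (d + 1) * C (d + 1) = real (m - d) * C d"
      using binom_rel[of d m] unfolding C_def by simp
    then have q: "real (m - d) / C (d + 1) = real (d + 1) / C d"
      by (subst frac_eq_eq) (use Cpos Cp in auto)
    have "real (n - 1 - d) * Kk n (d + 1) = (real (m - d) / C (d + 1)) * A (d + 1)"
      unfolding Kk_def A_def C_def m_def by simp
    then show ?thesis unfolding q by simp
  qed
  have t1: "Kk n d = A d / C d" unfolding Kk_def A_def C_def m_def by simp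
  have a1: "A (d - 1) = B d + A d" using Ak_step[of "d - 1" n] dm nm
    unfolding A_def B_def by simp
  have a2: "A d = B (d + 1) + A (d + 1)" using Ak_step[of d n] dm nm
    unfolding A_def B_def by simp
  have b: "real (d + 1) * B (d + 1) = real (n - d) * B d"
    using binom_rel[of d n] unfolding B_def by simp
  have "(real n + 1) * A d - real (m - d + 1) * A (d - 1) - real (d + 1) * A (d + 1) = 0"
  proof -
    have e: "real (m - d + 1) = real n - real d" "real n = real m + 1" "real (n - d) = real n - real d"
      using dm nm by auto
    show ?thesis using a1 a2 b unfolding e by (simp add: algebra_simps)
  qed
  then have "((real n + 1) * A d - real (m - d + 1) * A (d - 1) - real (d + 1) * A (d + 1)) / C d = 0"
    by simp
  then show ?thesis using False t1 t2 t3 Cpos by (simp add: diff_divide_distrib)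
qed

lemma u_top_eq:
  "u_top N v i S = 1 / (real (card N) * 2 ^ card N) *
     (\<Sum>T\<in>Pow (N - {i}). Kk (card N) (card (symdiff S T)) * (v (insert i T) - v T))"
  unfolding u_top_def Kk_def Ak_def by simp

lemma cnt:
  assumes "finite M" "D \<subseteq> M"
  shows "(\<Sum>j\<in>M. K (card (symdiff D {j}))) =
         real (card D) * K (card D - 1) + real (card M - card D) * K (card D + 1)"
proof -
  have fD: "finite D" using assms finite_subset by blast
  have "(\<Sum>j\<in>M. K (card (symdiff D {j}))) =
        (\<Sum>j\<in>M - D. K (card (symdiff D {j}))) + (\<Sum>j\<in>D. K (card (symdiff D {j})))"
    by (rule sum.subset_diff[OF assms(2) assms(1)])
  also have "(\<Sum>j\<in>D. K (card (symdiff D {j}))) = (\<Sum>j\<in>D. K (card D - 1))"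
  proof (rule sum.cong[OF refl])
    fix j assume "j \<in> D"
    then have "symdiff D {j} = D - {j}" unfolding symdiff_def by auto
    then show "K (card (symdiff D {j})) = K (card D - 1)" using \<open>j \<in> D\<close> fD by simp
  qed
  also have "(\<Sum>j\<in>M - D. K (card (symdiff D {j}))) = (\<Sum>j\<in>M - D. K (card D + 1))"
  proof (rule sum.cong[OF refl])
    fix j assume "j \<in> M - D"
    then have "symdiff D {j} = insert j D" "j \<notin> D" unfolding symdiff_def by auto
    then show "K (card (symdiff D {j})) = K (card D + 1)" using fD by simp
  qed
  finally show ?thesis using assms by (simp add: card_Diff_subset fD)
qed

lemma lap:
  assumes fin: "finite N" and iN: "i \<in> N" and S: "S \<subseteq> N - {i}"
  shows "(real (card (N - {i})) + 2) * u_top N v i S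
         - (\<Sum>j\<in>N - {i}. u_top N v i (symdiff S {j})) = v (insert i S) - v S"
proof -
  define M where "M = N - {i}"
  define n where "n = card N"
  define c where "c = 1 / (real n * 2 ^ n)"
  define K where "K k = Kk n k" for k
  define g where "g T = v (insert i T) - v T" for T
  have fM: "finite M" using fin M_def by simp
  have n1: "n \<ge> 1" using fin iN n_def by (metis One_nat_def Suc_leI card_gt_0_iff empty_iff)
  have cM: "card M = n - 1" using fin iN unfolding M_def n_def by simp
  have f: "u_top N v i X = c * (\<Sum>T\<in>Pow M. K (card (symdiff X T)) * g T)" for X
    unfolding u_top_eq c_def K_def g_def M_def n_def ..
  have SM: "S \<subseteq> M" using S M_def by simp
  have sd: "symdiff (symdiff S {j}) T = symdiff (symdiff S T) {j}" for j T
    unfolding symdiff_def by auto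
  have dsub: "symdiff S T \<subseteq> M" if "T \<in> Pow M" for T
    using that SM unfolding symdiff_def by auto
  have "(\<Sum>j\<in>M. u_top N v i (symdiff S {j}))
      = c * (\<Sum>j\<in>M. \<Sum>T\<in>Pow M. K (card (symdiff (symdiff S T) {j})) * g T)"
    unfolding f sd by (simp add: sum_distrib_left)
  also have "\<dots> = c * (\<Sum>T\<in>Pow M. g T * (\<Sum>j\<in>M. K (card (symdiff (symdiff S T) {j}))))"
    by (subst sum.swap) (simp add: sum_distrib_left mult.commute)
  also have "\<dots> = c * (\<Sum>T\<in>Pow M. g T * (real (card (symdiff S T)) * K (card (symdiff S T) - 1)
        + real (card M - card (symdiff S T)) * K (card (symdiff S T) + 1)))"
    using cnt[OF fM dsub] by simp
  finally have e1: "(\<Sum>j\<in>M. u_top N v i (symdiff S {j})) = \<dots>" .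
  have "(real (card M) + 2) * u_top N v i S - (\<Sum>j\<in>M. u_top N v i (symdiff S {j}))
      = c * (\<Sum>T\<in>Pow M. g T * ((real n + 1) * K (card (symdiff S T))
           - real (card (symdiff S T)) * K (card (symdiff S T) - 1)
           - real (n - 1 - card (symdiff S T)) * K (card (symdiff S T) + 1)))"
  proof -
    have rc: "real (card M) + 2 = real n + 1" using cM n1 by simp
    show ?thesis unfolding rc e1 unfolding f cM
      by (simp add: sum_distrib_left sum_subtractf[symmetric] algebra_simps)
  qed
  also have "\<dots> = c * (\<Sum>T\<in>Pow M. g T * (if T = S then real n * 2 ^ n else 0))"
  proof -
    have "(real n + 1) * K (card (symdiff S T))
           - real (card (symdiff S T)) * K (card (symdiff S T) - 1)
           - real (n - 1 - card (symdiff S T)) * K (card (symdiff S T) + 1)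
          = (if T = S then real n * 2 ^ n else 0)" if T: "T \<in> Pow M" for T
    proof -
      have le: "card (symdiff S T) \<le> n - 1"
        using card_mono[OF fM dsub[OF T]] cM by simp
      have fST: "finite (symdiff S T)" using dsub[OF T] fM finite_subset by blast
      have "card (symdiff S T) = 0 \<longleftrightarrow> T = S"
        using fST unfolding symdiff_def by auto
      then show ?thesis using kernel[OF n1 le] unfolding K_def by simp
    qed
    then show ?thesis by (intro arg_cong[where f = "\<lambda>x. c * x"] sum.cong) auto
  qed
  also have "\<dots> = c * (g S * (real n * 2 ^ n))"
    using SM fM by (simp add: sum.delta' if_distrib cong: if_cong)
  also have "\<dots> = g S" unfolding c_def using n1 by simp
  finally show ?thesis unfolding M_def g_def .
qed

lemma orth:
  assumes fin: "finite N" and iN: "i \<in> N"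
  shows "inner_E N (\<lambda>e. grad_i i v e - grad (u_fn N v i) e) (grad \<phi>) = 0"
proof -
  define M where "M = N - {i}"
  define u where "u = u_fn N v i"
  define f where "f = u_top N v i"
  define h where "h e = grad_i i v e - grad u e" for e
  define \<psi> where "\<psi> T = \<phi> (insert i T) - \<phi> T" for T
  define g where "g T = v (insert i T) - v T" for T
  have fM: "finite M" using fin M_def by simp
  have iM: "i \<notin> M" using M_def by simp
  have uin: "u (insert i T) = f T" "u T = - f T" if "i \<notin> T" for T
    using that unfolding u_def u_fn_def f_def by auto
  have "inner_E N h (grad \<phi>) = (\<Sum>j\<in>N. \<Sum>S\<in>Pow (N - {j}). h (S, j) * grad \<phi> (S, j))"
    by (rule inner_E_split[OF fin])
  also have "\<dots> = (\<Sum>S\<in>Pow M. h (S, i) * grad \<phi> (S, i))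
      + (\<Sum>j\<in>M. \<Sum>S\<in>Pow (N - {j}). h (S, j) * grad \<phi> (S, j))"
    unfolding M_def using fin iN by (simp add: sum.remove)
  also have "(\<Sum>S\<in>Pow M. h (S, i) * grad \<phi> (S, i)) = (\<Sum>T\<in>Pow M. \<psi> T * (g T - 2 * f T))"
  proof (rule sum.cong[OF refl])
    fix T assume "T \<in> Pow M"
    then have "i \<notin> T" using iM by auto
    then show "h (T, i) * grad \<phi> (T, i) = \<psi> T * (g T - 2 * f T)"
      unfolding h_def grad_i_def grad_def \<psi>_def g_def using uin[OF \<open>i \<notin> T\<close>] by simp
  qed
  also have "(\<Sum>j\<in>M. \<Sum>S\<in>Pow (N - {j}). h (S, j) * grad \<phi> (S, j))
      = (\<Sum>j\<in>M. - (\<Sum>T\<in>Pow (M - {j}). (f (insert j T) - f T) * (\<psi> (insert j T) - \<psi> T)))"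
  proof (rule sum.cong[OF refl])
    fix j assume j: "j \<in> M"
    then have ji: "j \<noteq> i" using iM by auto
    have Nj: "N - {j} = insert i (M - {j})" using j iN M_def by auto
    have "(\<Sum>S\<in>Pow (N - {j}). h (S, j) * grad \<phi> (S, j))
        = (\<Sum>T\<in>Pow (M - {j}). h (T, j) * grad \<phi> (T, j) + h (insert i T, j) * grad \<phi> (insert i T, j))"
      unfolding Nj by (rule sum_Pow_insert) (use fM iM in auto)
    also have "\<dots> = (\<Sum>T\<in>Pow (M - {j}). - ((f (insert j T) - f T) * (\<psi> (insert j T) - \<psi> T)))"
    proof (rule sum.cong[OF refl])
      fix T assume "T \<in> Pow (M - {j})"
      then have iT: "i \<notin> T" and iT2: "i \<notin> insert j T" using iM ji by auto
      have c: "insert j (insert i T) = insert i (insert j T)" by auto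
      show "h (T, j) * grad \<phi> (T, j) + h (insert i T, j) * grad \<phi> (insert i T, j)
          = - ((f (insert j T) - f T) * (\<psi> (insert j T) - \<psi> T))"
        unfolding h_def grad_i_def grad_def \<psi>_def c using ji uin[OF iT] uin[OF iT2]
        by (simp add: algebra_simps c)
    qed
    finally show "(\<Sum>S\<in>Pow (N - {j}). h (S, j) * grad \<phi> (S, j))
      = - (\<Sum>T\<in>Pow (M - {j}). (f (insert j T) - f T) * (\<psi> (insert j T) - \<psi> T))"
      by (simp add: sum_negf)
  qed
  also have "\<dots> = (\<Sum>T\<in>Pow M. \<psi> T * (\<Sum>j\<in>M. f (symdiff T {j}) - f T))"
    using laplace_parts[OF fM, of f \<psi>] by (simp add: sum_negf)
  also have "(\<Sum>T\<in>Pow M. \<psi> T * (g T - 2 * f T)) + \<dots> = 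
      (\<Sum>T\<in>Pow M. \<psi> T * ((g T - 2 * f T) + (\<Sum>j\<in>M. f (symdiff T {j}) - f T)))"
    by (simp add: sum.distrib distrib_left)
  also have "\<dots> = 0"
  proof (rule sum.neutral, rule ballI)
    fix T assume T: "T \<in> Pow M"
    have L: "(real (card M) + 2) * f T - (\<Sum>j\<in>M. f (symdiff T {j})) = g T"
      using lap[OF fin iN, of T v] T unfolding M_def f_def g_def by auto
    have "(\<Sum>j\<in>M. f (symdiff T {j}) - f T) = (\<Sum>j\<in>M. f (symdiff T {j})) - real (card M) * f T"
      by (simp add: sum_subtractf)
    then have "(g T - 2 * f T) + (\<Sum>j\<in>M. f (symdiff T {j}) - f T) = 0"
      using L by (simp add: algebra_simps)
    then show "\<psi> T * ((g T - 2 * f T) + (\<Sum>j\<in>M. f (symdiff T {j}) - f T)) = 0" by simp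
  qed
  finally show ?thesis unfolding h_def u_def .
qed

theorem theorem3p9:
  fixes N :: "'a set" and v :: "'a set \<Rightarrow> real" and i :: 'a and w :: "'a set \<Rightarrow> real"
  assumes "finite N" and "v {} = 0" and "i \<in> N"
    and "is_component_game N v i w"
  shows "(\<forall>S\<in>Pow N. w S = u_fn N v i S - u_fn N v i {}) \<and>
         u_fn N v i {} =
           - (1 / (real (card N) * 2 ^ card N) *
              (\<Sum>T\<in>Pow (N - {i}).
                 (\<Sum>k = card T + 1..card N. real (card N choose k))
                   / real ((card N - 1) choose card T)
                 * (v (insert i T) - v T)))"
proof
  define u where "u = u_fn N v i"
  have w0: "w {} = 0" and ow: "\<And>\<phi>. inner_E N (\<lambda>e. grad_i i v e - grad w e) (grad \<phi>) = 0"
    using assms(4) unfolding is_component_game_def is_proj_range_d_def by auto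
  have ou: "\<And>\<phi>. inner_E N (\<lambda>e. grad_i i v e - grad u e) (grad \<phi>) = 0"
    unfolding u_def by (rule orth[OF assms(1) assms(3)])
  have gd: "grad (\<lambda>X. w X - u X) e = grad w e - grad u e" for e
    unfolding grad_def by (simp add: case_prod_unfold)
  have "inner_E N (\<lambda>e. grad w e - grad u e) (grad \<phi>) = 0" for \<phi>
  proof -
    have "inner_E N (\<lambda>e. grad w e - grad u e) (grad \<phi>)
        = inner_E N (\<lambda>e. grad_i i v e - grad u e) (grad \<phi>)
          - inner_E N (\<lambda>e. grad_i i v e - grad w e) (grad \<phi>)"
      unfolding inner_E_def by (simp add: sum_subtractf[symmetric] algebra_simps)
    then show ?thesis using ou ow by simp
  qed
  from this[of "\<lambda>X. w X - u X"]
  have "(\<Sum>e\<in>hc_edges N. (grad w e - grad u e)^2) = 0"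
    unfolding inner_E_def gd by (simp add: power2_eq_square)
  moreover have "finite (hc_edges N)"
  proof -
    have "hc_edges N \<subseteq> Pow N \<times> N" unfolding hc_edges_def by auto
    then show ?thesis using assms(1) finite_subset by blast
  qed
  ultimately have ge: "\<forall>e\<in>hc_edges N. grad w e = grad u e"
    using sum_nonneg_eq_0_iff[of "hc_edges N" "\<lambda>e. (grad w e - grad u e)^2"] by auto
  have ind: "X \<subseteq> N \<longrightarrow> w X - u X = w {} - u {}" if "finite X" for X
    using that
  proof (induction X rule: finite_induct)
    case empty then show ?case by simp
  next
    case (insert x X)
    show ?case
    proof
      assume s: "insert x X \<subseteq> N"
      then have "(X, x) \<in> hc_edges N" using insert.hyps unfolding hc_edges_def by auto
      then have "grad w (X, x) = grad u (X, x)" using ge by blast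
      then have "w (insert x X) - u (insert x X) = w X - u X" unfolding grad_def by simp
      then show "w (insert x X) - u (insert x X) = w {} - u {}" using insert.IH s by simp
    qed
  qed
  show "\<forall>S\<in>Pow N. w S = u_fn N v i S - u_fn N v i {}"
  proof
    fix S assume "S \<in> Pow N"
    then have "S \<subseteq> N" "finite S" using assms(1) finite_subset by auto
    then show "w S = u_fn N v i S - u_fn N v i {}" using ind[of S] w0 unfolding u_def by simp
  qed
next
  have "symdiff {} T = T" for T :: "'a set" unfolding symdiff_def by simp
  then show "u_fn N v i {} =
           - (1 / (real (card N) * 2 ^ card N) *
              (\<Sum>T\<in>Pow (N - {i}).
                 (\<Sum>k = card T + 1..card N. real (card N choose k))
                   / real ((card N - 1) choose card T)
                 * (v (insert i T) - v T)))"
    unfolding u_fn_def u_top_def by simp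
qed

end
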